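(* Let $m_1,m_2\ge3$ be coprime integers, let $n\ge1$ be divisible by $m_1$, and let $Q\in C(n,m_1,m_2)$. 1) If $Ch_1(Q)\ne0$, then $Ch_2(Q)=0$. 2) If $Ch_1(Q)\ne0$ and $Ch_3(Q)\ne0$, then $m_1=3$ and $Ch_4(Q)=0$. 3) If $Ch_1(Q)\ne0$, $Ch_3(Q)\ne0$ and $Ch_5(Q)\ne0$, then $m_1=3$ and $m_2=4$.
   Context: $T_k$ denotes the Chebyshev polynomial of the first kind of degree $k$, $T_k(\cos\phi)=\cos(k\phi)$. Every real polynomial $Q$ of degree $n$ can be uniquely written as $Q=\sum_{k=0}^n d_kT_k$ with $d_k\in\mathbb{R}$; set $Ch_i(Q)=d_{n-i}$ for $0\le i\le n$. $C(n,m_1,m_2)$ denotes the set of real polynomials $Q=\sum_{k=0}^n d_kT_k$ with $d_n\ne0$ and such that $d_k=0$ unless $k$ is divisible by $m_1$ or by $m_2$. *)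

theory Defs
  imports "HOL-Computational_Algebra.Polynomial" Complex_Main
begin

fun cheb :: "nat \<Rightarrow> real poly" where
  "cheb 0 = 1"
| "cheb (Suc 0) = [:0, 1:]"
| "cheb (Suc (Suc n)) = [:0, 2:] * cheb (Suc n) - cheb n"

definition cheb_coeffs :: "real poly \<Rightarrow> nat \<Rightarrow> real" where
  "cheb_coeffs Q = (THE d. (\<forall>k>degree Q. d k = 0) \<and>
       Q = (\<Sum>k\<le>degree Q. smult (d k) (cheb k)))"

text \<open>Ch_i(Q) = d_{n-i} for 0 <= i <= n = deg Q; set to 0 for i > n (i.e. d_{n-i} with
  d_j = 0 for negative j).\<close>
definition Ch :: "nat \<Rightarrow> real poly \<Rightarrow> real" where
  "Ch i Q = (if i \<le> degree Q then cheb_coeffs Q (degree Q - i) else 0)"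

definition C_set :: "nat \<Rightarrow> nat \<Rightarrow> nat \<Rightarrow> real poly set" where
  "C_set n m1 m2 = {Q. degree Q = n \<and> cheb_coeffs Q n \<noteq> 0 \<and>
       (\<forall>k\<le>n. cheb_coeffs Q k \<noteq> 0 \<longrightarrow> m1 dvd k \<or> m2 dvd k)}"

end

theory Submission
  imports Defs
begin

lemma ch_nz:
  assumes "Q \<in> C_set n m1 m2" and "Ch i Q \<noteq> 0"
  shows "\<exists>a. n = a + i \<and> (m1 dvd a \<or> m2 dvd a)"
proof -
  have d: "degree Q = n" using assms(1) by (simp add: C_set_def)
  have "i \<le> n" using assms(2) d by (simp add: Ch_def split: if_splits)
  moreover have "cheb_coeffs Q (n - i) \<noteq> 0" using assms(2) d by (simp add: Ch_def split: if_splits)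
  ultimately have "m1 dvd (n - i) \<or> m2 dvd (n - i)" using assms(1) by (auto simp: C_set_def)
  thus ?thesis using \<open>i \<le> n\<close> by (intro exI[of _ "n - i"]) auto
qed

lemma dd: "(m::nat) dvd x \<Longrightarrow> m dvd x + c \<Longrightarrow> m dvd c"
  using dvd_add_right_iff by blast

lemma small: "(m::nat) \<ge> 3 \<Longrightarrow> m dvd c \<Longrightarrow> c \<in> {1,2} \<Longrightarrow> False"
  by (auto dest: dvd_imp_le)

theorem lemma3p3:
  fixes m1 m2 n :: nat and Q :: "real poly"
  assumes "m1 \<ge> 3" and "m2 \<ge> 3" and "coprime m1 m2"
    and "n \<ge> 1" and "m1 dvd n"
    and "Q \<in> C_set n m1 m2"
  shows "(Ch 1 Q \<noteq> 0 \<longrightarrow> Ch 2 Q = 0)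
       \<and> (Ch 1 Q \<noteq> 0 \<and> Ch 3 Q \<noteq> 0 \<longrightarrow> m1 = 3 \<and> Ch 4 Q = 0)
       \<and> (Ch 1 Q \<noteq> 0 \<and> Ch 3 Q \<noteq> 0 \<and> Ch 5 Q \<noteq> 0 \<longrightarrow> m1 = 3 \<and> m2 = 4)"
proof -
  have A: "m2 dvd n - 1" if h: "Ch 1 Q \<noteq> 0"
  proof -
    obtain a where a: "n = a + 1" "m1 dvd a \<or> m2 dvd a" using ch_nz[OF assms(6) h] by blast
    have "\<not> m1 dvd a" using dd[of m1 a 1] assms(1,5) a(1) small[of m1 1] by auto
    thus ?thesis using a by auto
  qed
  have B: "m1 = 3" if h: "Ch 1 Q \<noteq> 0" "Ch 3 Q \<noteq> 0"
  proof -
    obtain a where a: "n = a + 3" "m1 dvd a \<or> m2 dvd a" using ch_nz[OF assms(6) h(2)] by blast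
    have "m2 dvd a + 2" using A[OF h(1)] a(1) by (simp add: numeral_eq_Suc)
    have "\<not> m2 dvd a" using dd[of m2 a 2] \<open>m2 dvd a + 2\<close> assms(2) small[of m2 2] by auto
    hence "m1 dvd a" using a by auto
    hence "m1 dvd 3" using dd[of m1 a 3] assms(5) a(1) by auto
    thus ?thesis using assms(1) by (auto dest: dvd_imp_le)
  qed
  have P1: "Ch 2 Q = 0" if h: "Ch 1 Q \<noteq> 0"
  proof (rule ccontr)
    assume "Ch 2 Q \<noteq> 0"
    then obtain a where a: "n = a + 2" "m1 dvd a \<or> m2 dvd a" using ch_nz[OF assms(6)] by blast
    have "m2 dvd a + 1" using A[OF h] a(1) by simp
    have "\<not> m2 dvd a" using dd[of m2 a 1] \<open>m2 dvd a + 1\<close> assms(2) small[of m2 1] by auto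
    moreover have "\<not> m1 dvd a" using dd[of m1 a 2] assms(1,5) a(1) small[of m1 2] by auto
    ultimately show False using a by auto
  qed
  have P2: "Ch 4 Q = 0" if h: "Ch 1 Q \<noteq> 0" "Ch 3 Q \<noteq> 0"
  proof (rule ccontr)
    assume "Ch 4 Q \<noteq> 0"
    then obtain a where a: "n = a + 4" "m1 dvd a \<or> m2 dvd a" using ch_nz[OF assms(6)] by blast
    have m1: "m1 = 3" using B[OF h] .
    have "m2 dvd a + 3" using A[OF h(1)] a(1) by (simp add: numeral_eq_Suc)
    have "\<not> m1 dvd a"
    proof
      assume "m1 dvd a"
      hence "m1 dvd 4" using dd[of m1 a 4] assms(5) a(1) by auto
      thus False using m1 by simp
    qed
    hence "m2 dvd a" using a by auto
    hence "m2 dvd 3" using dd[of m2 a 3] \<open>m2 dvd a + 3\<close> by auto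
    hence "m2 = 3" using assms(2) by (auto dest: dvd_imp_le)
    thus False using m1 assms(3) by simp
  qed
  have P3: "m2 = 4" if h: "Ch 1 Q \<noteq> 0" "Ch 3 Q \<noteq> 0" "Ch 5 Q \<noteq> 0"
  proof -
    obtain a where a: "n = a + 5" "m1 dvd a \<or> m2 dvd a" using ch_nz[OF assms(6) h(3)] by blast
    have m1: "m1 = 3" using B[OF h(1,2)] .
    have "m2 dvd a + 4" using A[OF h(1)] a(1) by (simp add: numeral_eq_Suc)
    have "\<not> m1 dvd a"
    proof
      assume "m1 dvd a"
      hence "m1 dvd 5" using dd[of m1 a 5] assms(5) a(1) by auto
      thus False using m1 by simp
    qed
    hence "m2 dvd a" using a by auto
    hence "m2 dvd 4" using dd[of m2 a 4] \<open>m2 dvd a + 4\<close> by auto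
    hence "m2 \<le> 4" by (auto dest: dvd_imp_le)
    moreover have "m2 \<noteq> 3" using \<open>m2 dvd 4\<close> by auto
    ultimately show ?thesis using assms(2) by simp
  qed
  show ?thesis using P1 P2 P3 B by blast
qed

end
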